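(* Let $(Y_t,\lambda_t)_{t\in\mathbb{N}_0}$ be a nonstationary INARCH(1) process with linear trend: conditionally on $\sigma(Y_0,\lambda_0,\ldots,Y_{t-1},\lambda_{t-1})$, $Y_t\sim\mathrm{Pois}(\lambda_t)$, where \[\lambda_t=aY_{t-1}+b_0+b_1t,\qquad a\in(0,1),\ b_0\ge0,\ b_1>0,\ t\in\mathbb{N}_0,\] and $\lambda_0$ has a finite absolute fourth moment. Given observations $Y_0,\ldots,Y_n$, define $w_t=\big(t-\frac{n+1}{2}\big)\big/\sqrt{\sum_{s=1}^n\big(s-\frac{n+1}{2}\big)^2}$ and $\widehat\theta_1=\sum_{t=1}^n w_tY_t$. Then for every $K>0$, \[\mathbb P(\widehat\theta_1>K)\to1\qquad (n\to\infty).\] *)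

theory Defs
  imports "HOL-Probability.Probability"
begin

definition pois_prob :: "real \<Rightarrow> nat \<Rightarrow> real" where
  "pois_prob r k = r ^ k / fact k * exp (- r)"

definition gen_sigma :: "'a measure \<Rightarrow> ('a \<Rightarrow> real) set \<Rightarrow> 'a measure" where
  "gen_sigma M Xs = sigma (space M) {X -` B \<inter> space M | X B. X \<in> Xs \<and> B \<in> sets borel}"

text \<open>Past information at time t: sigma(lambda_0, Y_0, ..., Y_{t-1}) (lambda_1..lambda_t are functions of these).\<close>
definition past_sigma :: "'a measure \<Rightarrow> (nat \<Rightarrow> 'a \<Rightarrow> nat) \<Rightarrow> (nat \<Rightarrow> 'a \<Rightarrow> real) \<Rightarrow> nat \<Rightarrow> 'a measure" where
  "past_sigma M Y lam t = gen_sigma M ({lam 0} \<union> {(\<lambda>x. real (Y s x)) | s. s < t})"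

definition trend_weight :: "nat \<Rightarrow> nat \<Rightarrow> real" where
  "trend_weight n t = (real t - (real n + 1) / 2) /
      sqrt (\<Sum>s = 1..n. (real s - (real n + 1) / 2)^2)"

definition theta1_hat :: "(nat \<Rightarrow> 'a \<Rightarrow> nat) \<Rightarrow> nat \<Rightarrow> 'a \<Rightarrow> real" where
  "theta1_hat Y n x = (\<Sum>t = 1..n. trend_weight n t * real (Y t x))"

end

theory Submission imports Defs begin

lemma pbound_gen:
  fixes n s a Cb b1 :: real
  assumes n: "n \<ge> 2" and s: "s > 0" and sq: "s^2 = n * (n - 1) * (n + 1) / 12"
    and a: "a \<ge> 0" and C: "Cb \<ge> 0" and b1: "b1 > 0"
  shows "a * ((n + 1) / 2 / s) * (Cb * (n + 2)) / (b1 * s / 3) + Cb * (n + 1) / (b1 * s / 3)^2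
     \<le> (36 * a * Cb / b1 + 108 * Cb / b1^2) / (n - 1)"
proof -
  have ss: "s * s = n * (n - 1) * (n + 1) / 12" using sq by (simp add: power2_eq_square)
  have t1: "a * ((n + 1) / 2 / s) * (Cb * (n + 2)) / (b1 * s / 3) = 18 * a * Cb * (n + 2) / (b1 * n * (n - 1))"
  proof -
    have "a * ((n + 1) / 2 / s) * (Cb * (n + 2)) / (b1 * s / 3) = 3 * a * Cb * (n + 1) * (n + 2) / (2 * b1 * (s * s))"
      using s b1 by (simp add: field_simps)
    also have "\<dots> = 18 * a * Cb * (n + 2) / (b1 * n * (n - 1))"
    proof -
      have nz: "n \<noteq> 0" "n - 1 \<noteq> 0" "n + 1 \<noteq> 0" "b1 \<noteq> 0" using n b1 by auto
      have "3 * a * Cb * (n + 1) * (n + 2) / (2 * b1 * (n * (n - 1) * (n + 1) / 12))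
          = (n + 1) * (18 * a * Cb * (n + 2)) / ((n + 1) * (b1 * n * (n - 1)))"
      proof -
        have d1: "2 * b1 * (n * (n - 1) * (n + 1) / 12) \<noteq> 0" using nz by simp
        have d2: "(n + 1) * (b1 * n * (n - 1)) \<noteq> 0" using nz by simp
        show ?thesis by (rule iffD2[OF frac_eq_eq[OF d1 d2]]) (simp add: field_simps)
      qed
      also have "\<dots> = 18 * a * Cb * (n + 2) / (b1 * n * (n - 1))"
        using nz by (intro mult_divide_mult_cancel_left) 
      finally show ?thesis unfolding ss .
    qed
    finally show ?thesis .
  qed
  have t2: "Cb * (n + 1) / (b1 * s / 3)^2 = 108 * Cb / (b1^2 * n * (n - 1))"
  proof -
    have "Cb * (n + 1) / (b1 * s / 3)^2 = 9 * Cb * (n + 1) / (b1^2 * (s * s))"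
      using s b1 by (simp add: field_simps power2_eq_square)
    also have "\<dots> = 108 * Cb / (b1^2 * n * (n - 1))"
    proof -
      have d1: "b1^2 * (n * (n - 1) * (n + 1) / 12) \<noteq> 0" using n b1 by simp
      have d2: "b1^2 * n * (n - 1) \<noteq> 0" using n b1 by simp
      show ?thesis unfolding ss by (rule iffD2[OF frac_eq_eq[OF d1 d2]]) (simp add: field_simps)
    qed
    finally show ?thesis .
  qed
  have u1: "18 * a * Cb * (n + 2) / (b1 * n * (n - 1)) \<le> 36 * a * Cb / b1 / (n - 1)"
  proof -
    have "(n + 2) / n \<le> 2" using n by (simp add: field_simps)
    then have "18 * a * Cb / b1 / (n - 1) * ((n + 2) / n) \<le> 18 * a * Cb / b1 / (n - 1) * 2"
      using a C b1 n by (intro mult_left_mono) auto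
    then show ?thesis by (simp add: field_simps)
  qed
  have u2: "108 * Cb / (b1^2 * n * (n - 1)) \<le> 108 * Cb / b1^2 / (n - 1)"
  proof -
    have "1 / n \<le> 1" using n by simp
    then have "108 * Cb / b1^2 / (n - 1) * (1 / n) \<le> 108 * Cb / b1^2 / (n - 1) * 1"
      using C b1 n by (intro mult_left_mono) auto
    then show ?thesis by (simp add: field_simps)
  qed
  show ?thesis unfolding t1 t2 using u1 u2 by (simp add: add_divide_distrib)
qed

lemma lim_aux: "(\<lambda>n. 1 - D / (real n - 1)) \<longlonglongrightarrow> (1::real)"
proof -
  have "filterlim (\<lambda>n. (-1) + real n) at_top sequentially"
    by (rule filterlim_tendsto_add_at_top[OF tendsto_const filterlim_real_sequentially])
  then have "filterlim (\<lambda>n. real n - 1) at_top sequentially" by simp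
  then have "(\<lambda>n. D / (real n - 1)) \<longlonglongrightarrow> 0"
    by (intro tendsto_divide_0[OF tendsto_const]) (rule filterlim_at_top_imp_at_infinity)
  then show ?thesis using tendsto_diff[OF tendsto_const[of 1]] by fastforce
qed


lemma pointwise_ineq:
  fixes w y e :: "nat \<Rightarrow> real" and a b0 b1 :: real
  assumes mono: "\<And>k. w k \<le> w (Suc k)" and ynn: "\<And>k. y k \<ge> 0" and a: "a \<ge> 0"
    and rec: "\<And>t. t \<ge> 1 \<Longrightarrow> y t = a * y (t - 1) + b0 + b1 * real t + e t"
  shows "(1 - a) * (\<Sum>t=1..n. w t * y t) \<ge> b0 * (\<Sum>t=1..n. w t) + b1 * (\<Sum>t=1..n. w t * real t)
      + (\<Sum>t=1..n. w t * e t) + a * (w 0 * y 0 - w n * y n)"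
proof -
  define T where "T = (\<Sum>t=1..n. w t * y t)"
  have T2: "T = (\<Sum>k<n. w (Suc k) * y (Suc k))" unfolding T_def by (simp add: sum.atLeast1_atMost_eq)
  have "T = (\<Sum>k<n. w (Suc k) * (a * y k + b0 + b1 * real (Suc k) + e (Suc k)))"
    unfolding T2 using rec by (intro sum.cong) auto
  also have "\<dots> = a * (\<Sum>k<n. w (Suc k) * y k) + b0 * (\<Sum>k<n. w (Suc k)) + b1 * (\<Sum>k<n. w (Suc k) * real (Suc k)) + (\<Sum>k<n. w (Suc k) * e (Suc k))"
    by (simp add: algebra_simps sum.distrib sum_distrib_left)
  also have "(\<Sum>k<n. w (Suc k)) = (\<Sum>t=1..n. w t)" by (simp add: sum.atLeast1_atMost_eq)
  also have "(\<Sum>k<n. w (Suc k) * real (Suc k)) = (\<Sum>t=1..n. w t * real t)" by (simp add: sum.atLeast1_atMost_eq)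
  also have "(\<Sum>k<n. w (Suc k) * e (Suc k)) = (\<Sum>t=1..n. w t * e t)" by (simp add: sum.atLeast1_atMost_eq)
  finally have T3: "T = a * (\<Sum>k<n. w (Suc k) * y k) + b0 * (\<Sum>t=1..n. w t) + b1 * (\<Sum>t=1..n. w t * real t) + (\<Sum>t=1..n. w t * e t)" .
  have "(\<Sum>k<n. w k * y k) \<le> (\<Sum>k<n. w (Suc k) * y k)"
    using mono ynn by (intro sum_mono mult_right_mono) auto
  moreover have "(\<Sum>k\<le>n. w k * y k) = w 0 * y 0 + T" unfolding T2 by (simp add: sum.atMost_shift)
  moreover have "(\<Sum>k\<le>n. w k * y k) = (\<Sum>k<n. w k * y k) + w n * y n" by (simp add: lessThan_Suc_atMost[symmetric])
  ultimately have "w 0 * y 0 + T - w n * y n \<le> (\<Sum>k<n. w (Suc k) * y k)" by linarith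
  then have "a * (w 0 * y 0 + T - w n * y n) \<le> a * (\<Sum>k<n. w (Suc k) * y k)" using a by (rule mult_left_mono)
  then show ?thesis using T3 unfolding T_def[symmetric] by (simp add: algebra_simps)
qed

definition Q :: "nat \<Rightarrow> real" where "Q n = (\<Sum>s=1..n. (real s - (real n + 1) / 2)^2)"

lemma sum_sq_shift: "(\<Sum>s=1..n. (real s - c)^2) = (\<Sum>s=1..n. (real s)^2) - 2 * c * (\<Sum>s=1..n. real s) + real n * c^2"
  by (induction n) (auto simp: power2_eq_square algebra_simps)

lemma sum_id: "(\<Sum>s=1..n. real s) = real n * (real n + 1) / 2"
  by (induction n) (auto simp: algebra_simps)

lemma sum_sq: "(\<Sum>s=1..n. (real s)^2) = real n * (real n + 1) * (2 * real n + 1) / 6"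
  by (induction n) (auto simp: algebra_simps power2_eq_square)

lemma Q_eq: "Q n = real n * (real n - 1) * (real n + 1) / 12"
  unfolding Q_def sum_sq_shift sum_id sum_sq by (simp add: field_simps power2_eq_square)


lemma tw_def2: "trend_weight n t = (real t - (real n + 1) / 2) / sqrt (Q n)"
  unfolding trend_weight_def Q_def by simp

lemma Q_pos: "n \<ge> 2 \<Longrightarrow> Q n > 0"
  unfolding Q_eq by simp

lemma tw_sum0: "(\<Sum>t=1..n. trend_weight n t) = 0"
proof -
  have "(\<Sum>t=1..n. real t - (real n + 1) / 2) = 0"
    using sum_id[of n] by (simp add: sum_subtractf)
  then show ?thesis unfolding tw_def2 by (simp add: sum_divide_distrib[symmetric])
qed

lemma tw_sumt: assumes "n \<ge> 2" shows "(\<Sum>t=1..n. trend_weight n t * real t) = sqrt (Q n)"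
proof -
  define c where "c = (real n + 1) / 2"
  have "(\<Sum>t=1..n. trend_weight n t * real t) = (\<Sum>t=1..n. ((real t - c)^2 + c * (real t - c))) / sqrt (Q n)"
    unfolding tw_def2 c_def[symmetric] sum_divide_distrib
    by (intro sum.cong) (auto simp: power2_eq_square field_simps)
  also have "(\<Sum>t=1..n. ((real t - c)^2 + c * (real t - c))) = Q n + c * (\<Sum>t=1..n. real t - c)"
    unfolding Q_def c_def[symmetric] by (simp add: sum.distrib sum_distrib_left)
  also have "(\<Sum>t=1..n. real t - c) = 0" unfolding c_def using sum_id[of n] by (simp add: sum_subtractf)
  finally show ?thesis using Q_pos[OF assms] by (simp add: real_div_sqrt)
qed

lemma tw_sq: assumes "n \<ge> 2" shows "(\<Sum>t=1..n. (trend_weight n t)^2) = 1"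
proof -
  have "(\<Sum>t=1..n. (trend_weight n t)^2) = Q n / (sqrt (Q n))^2"
    unfolding tw_def2 Q_def by (simp add: power_divide sum_divide_distrib)
  then show ?thesis using Q_pos[OF assms] by simp
qed

lemma Q_nonneg: "Q n \<ge> 0"
  unfolding Q_def by (intro sum_nonneg) auto

lemma tw_mono: "trend_weight n k \<le> trend_weight n (Suc k)"
  unfolding tw_def2 by (intro divide_right_mono) (auto simp: Q_nonneg)

lemma tw_0: "trend_weight n 0 = - ((real n + 1) / 2) / sqrt (Q n)"
  unfolding tw_def2 by simp

lemma tw_n: "trend_weight n n \<le> ((real n + 1) / 2) / sqrt (Q n)"
  unfolding tw_def2 by (intro divide_right_mono) (simp_all add: Q_nonneg field_simps)


locale inarch = prob_space M for M :: "'a measure" +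
  fixes Y :: "nat \<Rightarrow> 'a \<Rightarrow> nat" and lam :: "nat \<Rightarrow> 'a \<Rightarrow> real" and a b0 b1 :: real
  assumes Ymeas[measurable]: "\<And>t. Y t \<in> measurable M (count_space UNIV)"
    and lam0meas[measurable]: "lam 0 \<in> borel_measurable M"
    and lam0pos: "AE x in M. lam 0 x \<ge> 0"
    and lam0int: "integrable M (\<lambda>x. \<bar>lam 0 x\<bar> ^ 4)"
    and apos: "0 < a" and alt1: "a < 1" and b0pos: "0 \<le> b0" and b1pos: "0 < b1"
    and lamrec: "\<And>t x. t \<ge> 1 \<Longrightarrow> lam t x = a * real (Y (t - 1) x) + b0 + b1 * real t"
    and condpois: "\<And>t k. AE x in M.
           real_cond_exp M (past_sigma M Y lam t) (indicator {y \<in> space M. Y t y = k}) x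
             = pois_prob (lam t x) k"
begin

abbreviation "F t \<equiv> past_sigma M Y lam t"

definition "G t = {X -` B \<inter> space M | X B. X \<in> ({lam 0} \<union> {(\<lambda>x. real (Y s x)) | s. s < t}) \<and> B \<in> sets borel}"

lemma F_eq: "F t = sigma (space M) (G t)"
  unfolding past_sigma_def gen_sigma_def G_def by simp

lemma G_sub: "G t \<subseteq> sets M"
  unfolding G_def by auto

lemma space_F: "space (F t) = space M"
  unfolding F_eq by (simp add: space_measure_of_conv)

lemma sets_F: "sets (F t) = sigma_sets (space M) (G t)"
  unfolding F_eq using G_sub[of t] sets.sets_into_space by (intro sets_measure_of) blast

lemma subalg: "subalgebra M (F t)"
  unfolding subalgebra_def space_F sets_F
  using G_sub by (simp add: sets.sigma_sets_subset)

lemma fms: "finite_measure_subalgebra M (F t)"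
  unfolding finite_measure_subalgebra_def finite_measure_subalgebra_axioms_def
  using subalg finite_measure_axioms by auto

lemma sfs: "sigma_finite_subalgebra M (F t)"
  using fms finite_measure_subalgebra_is_sigma_finite by blast

lemma meas_G: assumes "X \<in> ({lam 0} \<union> {(\<lambda>x. real (Y s x)) | s. s < t})"
  shows "X \<in> borel_measurable (F t)"
proof (rule measurableI)
  fix A :: "real set" assume "A \<in> sets borel"
  then have "X -` A \<inter> space M \<in> G t" using assms unfolding G_def by blast
  then show "X -` A \<inter> space (F t) \<in> sets (F t)" unfolding space_F sets_F by auto
qed auto

lemma Y_F: "s < t \<Longrightarrow> (\<lambda>x. real (Y s x)) \<in> borel_measurable (F t)"
  by (rule meas_G) auto

lemma lam0_F[measurable]: "lam 0 \<in> borel_measurable (F t)"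
  by (rule meas_G) auto

lemma lam_eq: "t \<ge> 1 \<Longrightarrow> lam t = (\<lambda>x. a * real (Y (t - 1) x) + b0 + b1 * real t)"
  using lamrec by auto

lemma lam_F: "s \<le> t \<Longrightarrow> lam s \<in> borel_measurable (F t)"
proof (cases "s = 0")
  case False
  assume "s \<le> t"
  then have "s - 1 < t" using False by auto
  note [measurable] = Y_F[OF this]
  have eq: "lam s = (\<lambda>x. a * real (Y (s - 1) x) + b0 + b1 * real s)"
    using lam_eq[of s] False by simp
  show ?thesis unfolding eq by measurable
qed auto

lemma lam_M[measurable]: "lam s \<in> borel_measurable M"
  using measurable_from_subalg[OF subalg lam_F[of s s]] by simp

lemma lam_nonneg: "t \<ge> 1 \<Longrightarrow> lam t x \<ge> 0"
  using lamrec apos b0pos b1pos by simp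

lemma lam_AE_nonneg: "AE x in M. lam t x \<ge> 0"
  using lam0pos lam_nonneg by (cases "t = 0") auto


lemma pois_sums: "(\<lambda>k. pois_prob r k) sums 1"
proof -
  have "(\<lambda>n. r^n /\<^sub>R fact n) sums exp r" by (rule exp_converges)
  then have "(\<lambda>n. r^n / fact n) sums exp r" by (simp add: divide_inverse mult.commute)
  then have "(\<lambda>n. r^n / fact n * exp (-r)) sums (exp r * exp (-r))" by (rule sums_mult2)
  then show ?thesis unfolding pois_prob_def by (simp add: exp_minus)
qed

lemma pois_shift: "real (Suc m) * pois_prob r (Suc m) = r * pois_prob r m"
proof -
  have f: "fact (Suc m) = real (Suc m) * (fact m :: real)" by simp
  have "real (Suc m) * (r ^ Suc m / fact (Suc m)) = r * (r ^ m / fact m)"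
    unfolding f by (simp del: of_nat_Suc)
  then show ?thesis unfolding pois_prob_def by (simp only: mult.assoc[symmetric])
qed

lemma pois_sums1: "(\<lambda>k. real k * pois_prob r k) sums r"
proof -
  have "(\<lambda>m. r * pois_prob r m) sums (r * 1)" by (rule sums_mult[OF pois_sums])
  then have "(\<lambda>m. real (Suc m) * pois_prob r (Suc m)) sums r" by (simp only: pois_shift mult_1_right)
  then show ?thesis by (subst (asm) sums_Suc_iff) simp
qed

lemma pois_sums2: "(\<lambda>k. (real k)^2 * pois_prob r k) sums (r^2 + r)"
proof -
  have "(\<lambda>m. real m * pois_prob r m + pois_prob r m) sums (r + 1)"
    by (rule sums_add[OF pois_sums1 pois_sums])
  then have "(\<lambda>m. r * (real m * pois_prob r m + pois_prob r m)) sums (r * (r + 1))" by (rule sums_mult)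
  moreover have "\<And>m. r * (real m * pois_prob r m + pois_prob r m) = (real (Suc m))^2 * pois_prob r (Suc m)"
  proof -
    fix m
    have "(real (Suc m))^2 * pois_prob r (Suc m) = real (Suc m) * (real (Suc m) * pois_prob r (Suc m))"
      by (simp only: power2_eq_square mult.assoc)
    also have "\<dots> = real (Suc m) * (r * pois_prob r m)" by (simp only: pois_shift)
    also have "\<dots> = r * (real m * pois_prob r m + pois_prob r m)" by (simp add: algebra_simps)
    finally show "r * (real m * pois_prob r m + pois_prob r m) = (real (Suc m))^2 * pois_prob r (Suc m)" by simp
  qed
  ultimately have "(\<lambda>m. (real (Suc m))^2 * pois_prob r (Suc m)) sums (r^2 + r)"
    by (simp add: power2_eq_square distrib_left)
  then show ?thesis by (subst (asm) sums_Suc_iff) simp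
qed

lemma pois_nonneg: "r \<ge> 0 \<Longrightarrow> pois_prob r k \<ge> 0"
  unfolding pois_prob_def by simp

lemma Yk_sets[measurable]: "{y \<in> space M. Y t y = k} \<in> sets M"
  by measurable

lemma cd:
  assumes A: "A \<in> sets (F t)"
  shows "integrable M (\<lambda>x. indicator A x * pois_prob (lam t x) k)"
    "(\<integral>x. indicator A x * indicator {y \<in> space M. Y t y = k} x \<partial>M)
      = (\<integral>x. indicator A x * pois_prob (lam t x) k \<partial>M)"
proof -
  interpret S: sigma_finite_subalgebra M "F t" by (rule sfs)
  have AM: "A \<in> sets M" using A subalg[of t] unfolding subalgebra_def by auto
  have i1: "integrable M (\<lambda>x. indicator A x * indicator {y \<in> space M. Y t y = k} x :: real)"
    using AM by (intro integrable_real_mult_indicator) (auto intro!: integrable_real_indicator simp: less_top[symmetric] emeasure_finite)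
  have mA[measurable]: "indicator A \<in> borel_measurable (F t)" using A by measurable
  note R = S.real_cond_exp_intg[OF i1 mA]
  have ae: "AE x in M. indicator A x * real_cond_exp M (F t) (indicator {y \<in> space M. Y t y = k}) x
      = indicator A x * pois_prob (lam t x) k"
    using condpois[of t k] by eventually_elim simp
  have m2: "(\<lambda>x. indicator A x * pois_prob (lam t x) k) \<in> borel_measurable M"
    using AM unfolding pois_prob_def by measurable
  have m1: "(\<lambda>x. indicator A x * real_cond_exp M (F t) (indicator {y \<in> space M. Y t y = k}) x) \<in> borel_measurable M"
    using AM by measurable
  show "integrable M (\<lambda>x. indicator A x * pois_prob (lam t x) k)"
    using R(1) integrable_cong_AE[OF m1 m2 ae] by simp
  show "(\<integral>x. indicator A x * indicator {y \<in> space M. Y t y = k} x \<partial>M)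
      = (\<integral>x. indicator A x * pois_prob (lam t x) k \<partial>M)"
    using R(2) integral_cong_AE[OF m1 m2 ae] by simp
qed


lemma FM: "A \<in> sets (F t) \<Longrightarrow> A \<in> sets M"
  using subalg[of t] unfolding subalgebra_def by auto

lemma nn_cd:
  assumes A: "A \<in> sets (F t)" and g: "\<And>k. g k \<ge> 0"
  shows "(\<integral>\<^sup>+x. ennreal (indicator A x * g (Y t x)) \<partial>M)
    = (\<integral>\<^sup>+x. (\<Sum>k. ennreal (g k * (indicator A x * pois_prob (lam t x) k))) \<partial>M)"
proof -
  have AM[measurable]: "A \<in> sets M" using FM[OF A] .
  have "(\<integral>\<^sup>+x. ennreal (indicator A x * g (Y t x)) \<partial>M)
     = (\<integral>\<^sup>+x. (\<Sum>k. ennreal (g k * (indicator A x * indicator {y\<in>space M. Y t y = k} x))) \<partial>M)"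
  proof (rule nn_integral_cong)
    fix x assume x: "x \<in> space M"
    have "(\<lambda>k. ennreal (g k * (indicator A x * indicator {y\<in>space M. Y t y = k} x)))
       = (\<lambda>k. if k = Y t x then ennreal (indicator A x * g k) else 0)"
      using x by (auto simp: indicator_def)
    then show "ennreal (indicator A x * g (Y t x))
       = (\<Sum>k. ennreal (g k * (indicator A x * indicator {y\<in>space M. Y t y = k} x)))"
      using sums_unique[OF sums_single[of "Y t x" "\<lambda>k. ennreal (indicator A x * g k)"]] by simp
  qed
  also have "\<dots> = (\<Sum>k. \<integral>\<^sup>+x. ennreal (g k * (indicator A x * indicator {y\<in>space M. Y t y = k} x)) \<partial>M)"
    by (rule nn_integral_suminf) measurable
  also have "\<dots> = (\<Sum>k. \<integral>\<^sup>+x. ennreal (g k * (indicator A x * pois_prob (lam t x) k)) \<partial>M)"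
  proof (rule suminf_cong)
    fix k
    have i1: "integrable M (\<lambda>x. indicator A x * indicator {y \<in> space M. Y t y = k} x :: real)"
      using AM by (intro integrable_real_mult_indicator) (auto intro!: integrable_real_indicator simp: less_top[symmetric] emeasure_finite)
    have i2: "integrable M (\<lambda>x. indicator A x * pois_prob (lam t x) k)" by (rule cd(1)[OF A])
    have "(\<integral>\<^sup>+x. ennreal (g k * (indicator A x * indicator {y\<in>space M. Y t y = k} x)) \<partial>M)
       = ennreal (\<integral>x. g k * (indicator A x * indicator {y\<in>space M. Y t y = k} x) \<partial>M)"
      using i1 g by (intro nn_integral_eq_integral) auto
    also have "\<dots> = ennreal (g k * (\<integral>x. indicator A x * pois_prob (lam t x) k \<partial>M))"
      using cd(2)[OF A, of k] by simp
    also have "\<dots> = ennreal (\<integral>x. g k * (indicator A x * pois_prob (lam t x) k) \<partial>M)"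
      by simp
    also have "\<dots> = (\<integral>\<^sup>+x. ennreal (g k * (indicator A x * pois_prob (lam t x) k)) \<partial>M)"
      using i2 g lam_AE_nonneg[of t]
      by (intro nn_integral_eq_integral[symmetric]) (auto elim!: eventually_mono intro!: mult_nonneg_nonneg pois_nonneg)
    finally show "(\<integral>\<^sup>+x. ennreal (g k * (indicator A x * indicator {y\<in>space M. Y t y = k} x)) \<partial>M)
       = (\<integral>\<^sup>+x. ennreal (g k * (indicator A x * pois_prob (lam t x) k)) \<partial>M)" .
  qed
  also have "\<dots> = (\<integral>\<^sup>+x. (\<Sum>k. ennreal (g k * (indicator A x * pois_prob (lam t x) k))) \<partial>M)"
    unfolding pois_prob_def by (rule nn_integral_suminf[symmetric]) measurable
  finally show ?thesis .
qed

lemma N_gen: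
  assumes A: "A \<in> sets (F t)" and g: "\<And>k. g k \<ge> 0"
    and s: "\<And>r. r \<ge> 0 \<Longrightarrow> (\<lambda>k. g k * pois_prob r k) sums h r"
  shows "(\<integral>\<^sup>+x. ennreal (indicator A x * g (Y t x)) \<partial>M) = (\<integral>\<^sup>+x. ennreal (indicator A x * h (lam t x)) \<partial>M)"
proof -
  have ae: "AE x in M. (\<Sum>k. ennreal (g k * (indicator A x * pois_prob (lam t x) k))) = ennreal (indicator A x * h (lam t x))"
    using lam_AE_nonneg[of t]
  proof eventually_elim
    case (elim x)
    have "(\<lambda>k. indicator A x * (g k * pois_prob (lam t x) k)) sums (indicator A x * h (lam t x))"
      by (rule sums_mult[OF s[OF elim]])
    then show ?case
      using g elim by (intro suminf_ennreal_eq) (auto simp: ac_simps intro!: mult_nonneg_nonneg pois_nonneg)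
  qed
  show ?thesis by (rule trans[OF nn_cd[OF A g] nn_integral_cong_AE[OF ae]])
qed

lemma N1: "A \<in> sets (F t) \<Longrightarrow> (\<integral>\<^sup>+x. ennreal (indicator A x * real (Y t x)) \<partial>M) = (\<integral>\<^sup>+x. ennreal (indicator A x * lam t x) \<partial>M)"
  using N_gen[of A t real "\<lambda>r. r"] pois_sums1 by simp

lemma N2: "A \<in> sets (F t) \<Longrightarrow> (\<integral>\<^sup>+x. ennreal (indicator A x * (real (Y t x))^2) \<partial>M) = (\<integral>\<^sup>+x. ennreal (indicator A x * ((lam t x)^2 + lam t x)) \<partial>M)"
  using N_gen[of A t "\<lambda>k. (real k)^2" "\<lambda>r. r^2 + r"] pois_sums2 by simp


definition sq_int :: "('a \<Rightarrow> real) \<Rightarrow> bool" where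
  "sq_int f \<longleftrightarrow> f \<in> borel_measurable M \<and> integrable M (\<lambda>x. (f x)^2)"

lemma sq_intD: "sq_int f \<Longrightarrow> f \<in> borel_measurable M" "sq_int f \<Longrightarrow> integrable M (\<lambda>x. (f x)^2)"
  unfolding sq_int_def by auto

lemma abs_le_sq: "\<bar>u::real\<bar> \<le> 1 + u^2"
proof (cases "\<bar>u\<bar> \<le> 1")
  case True then show ?thesis using zero_le_power2[of u] by linarith
next
  case False
  then have "\<bar>u\<bar> * 1 \<le> \<bar>u\<bar> * \<bar>u\<bar>" by (intro mult_left_mono) auto
  then have "\<bar>u\<bar> \<le> u^2" by (simp add: power2_eq_square)
  then show ?thesis by linarith
qed

lemma abs4: "\<bar>(l::real)\<bar>^4 = (l^2)^2"
proof -
  have "(l^2)^2 = l^4" by (simp flip: power_mult)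
  moreover have "\<bar>l\<bar>^4 = \<bar>l^4\<bar>" by (simp add: power_abs)
  moreover have "l^4 \<ge> 0" by (simp add: zero_le_even_power)
  ultimately show ?thesis by simp
qed

lemma prod_le_sq: "\<bar>(u::real) * v\<bar> \<le> u^2 + v^2"
proof -
  have "0 \<le> (\<bar>u\<bar> - \<bar>v\<bar>)^2" by simp
  then have "2 * \<bar>u\<bar> * \<bar>v\<bar> \<le> u^2 + v^2" by (simp add: power2_eq_square algebra_simps)
  moreover have "0 \<le> \<bar>u\<bar> * \<bar>v\<bar>" by simp
  moreover have "\<bar>u * v\<bar> = \<bar>u\<bar> * \<bar>v\<bar>" by (rule abs_mult)
  ultimately show ?thesis by linarith
qed

lemma sq_int_integrable: "sq_int f \<Longrightarrow> integrable M f"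
  unfolding sq_int_def
  by (rule Bochner_Integration.integrable_bound[where f="\<lambda>x. 1 + (f x)^2"]) (auto intro!: abs_le_sq)

lemma sq_int_mult: "sq_int f \<Longrightarrow> sq_int g \<Longrightarrow> integrable M (\<lambda>x. f x * g x)"
  unfolding sq_int_def
  by (rule Bochner_Integration.integrable_bound[where f="\<lambda>x. (f x)^2 + (g x)^2"]) (auto intro!: prod_le_sq)

lemma sq_int_const: "sq_int (\<lambda>x. c)"
  unfolding sq_int_def by auto

lemma sq_int_cmult: "sq_int f \<Longrightarrow> sq_int (\<lambda>x. c * f x)"
  unfolding sq_int_def by (auto simp: power_mult_distrib)

lemma sq_int_add: "sq_int f \<Longrightarrow> sq_int g \<Longrightarrow> sq_int (\<lambda>x. f x + g x)"
proof -
  assume f: "sq_int f" and g: "sq_int g"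
  have "integrable M (\<lambda>x. (f x)^2 + (g x)^2 + 2 * (f x * g x))"
    using sq_intD[OF f] sq_intD[OF g] sq_int_mult[OF f g] by auto
  then show ?thesis using sq_intD[OF f] sq_intD[OF g]
    unfolding sq_int_def by (simp add: power2_eq_square algebra_simps)
qed

lemma sq_int_diff: "sq_int f \<Longrightarrow> sq_int g \<Longrightarrow> sq_int (\<lambda>x. f x - g x)"
  using sq_int_add[of f "\<lambda>x. (-1) * g x"] sq_int_cmult[of g "-1"] by simp

lemma sq_int_sum: "(\<And>i. i \<in> I \<Longrightarrow> sq_int (f i)) \<Longrightarrow> sq_int (\<lambda>x. \<Sum>i\<in>I. f i x)"
proof (induction I rule: infinite_finite_induct)
  case (insert i I)
  then show ?case using sq_int_add[of "f i" "\<lambda>x. \<Sum>i\<in>I. f i x"] by simp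
qed (auto simp: sq_int_const)

lemma Nsp1: "(\<integral>\<^sup>+x. ennreal (real (Y t x)) \<partial>M) = (\<integral>\<^sup>+x. ennreal (lam t x) \<partial>M)"
proof -
  have "(\<integral>\<^sup>+x. ennreal (real (Y t x)) \<partial>M) = (\<integral>\<^sup>+x. ennreal (indicator (space M) x * real (Y t x)) \<partial>M)"
    by (rule nn_integral_cong) simp
  also have "\<dots> = (\<integral>\<^sup>+x. ennreal (indicator (space M) x * lam t x) \<partial>M)"
    by (rule N1) (simp add: sets_F sigma_sets_top)
  also have "\<dots> = (\<integral>\<^sup>+x. ennreal (lam t x) \<partial>M)"
    by (rule nn_integral_cong) simp
  finally show ?thesis .
qed

lemma Nsp2: "(\<integral>\<^sup>+x. ennreal ((real (Y t x))^2) \<partial>M) = (\<integral>\<^sup>+x. ennreal ((lam t x)^2 + lam t x) \<partial>M)"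
proof -
  have "(\<integral>\<^sup>+x. ennreal ((real (Y t x))^2) \<partial>M) = (\<integral>\<^sup>+x. ennreal (indicator (space M) x * (real (Y t x))^2) \<partial>M)"
    by (rule nn_integral_cong) simp
  also have "\<dots> = (\<integral>\<^sup>+x. ennreal (indicator (space M) x * ((lam t x)^2 + lam t x)) \<partial>M)"
    by (rule N2) (simp add: sets_F sigma_sets_top)
  also have "\<dots> = (\<integral>\<^sup>+x. ennreal ((lam t x)^2 + lam t x) \<partial>M)"
    by (rule nn_integral_cong) simp
  finally show ?thesis .
qed

lemma sq_int_lam0: "sq_int (lam 0)"
  unfolding sq_int_def
proof
  show "integrable M (\<lambda>x. (lam 0 x)^2)"
  proof (rule Bochner_Integration.integrable_bound[where f="\<lambda>x. 1 + \<bar>lam 0 x\<bar>^4"])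
    show "integrable M (\<lambda>x. 1 + \<bar>lam 0 x\<bar>^4)" using lam0int by auto
    show "AE x in M. norm ((lam 0 x)^2) \<le> norm (1 + \<bar>lam 0 x\<bar>^4)"
    proof (rule AE_I2)
      fix x
      have "\<bar>(lam 0 x)^2\<bar> \<le> 1 + ((lam 0 x)^2)^2" by (rule abs_le_sq)
      then show "norm ((lam 0 x)^2) \<le> norm (1 + \<bar>lam 0 x\<bar>^4)"
        unfolding abs4 by simp
    qed
  qed auto
qed auto

lemma int_from_nn:
  assumes [measurable]: "f \<in> borel_measurable M" and "AE x in M. 0 \<le> f x"
    and "integrable M g" "AE x in M. 0 \<le> g x"
    and "(\<integral>\<^sup>+x. ennreal (f x) \<partial>M) = (\<integral>\<^sup>+x. ennreal (g x) \<partial>M)"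
  shows "integrable M f" "integral\<^sup>L M f = integral\<^sup>L M g"
proof -
  have e: "(\<integral>\<^sup>+x. ennreal (g x) \<partial>M) = ennreal (integral\<^sup>L M g)"
    using assms by (intro nn_integral_eq_integral) auto
  show fi: "integrable M f" using assms e by (intro integrableI_nn_integral_finite[where x="integral\<^sup>L M g"]) auto
  have "ennreal (integral\<^sup>L M f) = ennreal (integral\<^sup>L M g)"
    using assms e fi nn_integral_eq_integral[OF fi] by auto
  then show "integral\<^sup>L M f = integral\<^sup>L M g"
  proof -
    have "0 \<le> integral\<^sup>L M f" by (rule integral_nonneg_AE[OF assms(2)])
    moreover have "0 \<le> integral\<^sup>L M g" by (rule integral_nonneg_AE[OF assms(4)])
    ultimately show ?thesis using \<open>ennreal (integral\<^sup>L M f) = ennreal (integral\<^sup>L M g)\<close> by simp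
  qed
qed

lemma sq_int_step: "sq_int (lam t) \<Longrightarrow> sq_int (\<lambda>x. real (Y t x))"
proof -
  assume l: "sq_int (lam t)"
  have li: "integrable M (\<lambda>x. (lam t x)^2 + lam t x)"
    using sq_intD(2)[OF l] sq_int_integrable[OF l] by auto
  have "integrable M (\<lambda>x. (real (Y t x))^2)"
  proof (rule int_from_nn(1)[OF _ _ _ _ Nsp2])
    show "(\<lambda>x. (real (Y t x))^2) \<in> borel_measurable M" by measurable
  qed (use li lam_AE_nonneg[of t] in \<open>auto elim!: eventually_mono\<close>)
  then show ?thesis unfolding sq_int_def by auto
qed

lemma sq_int_all: "sq_int (lam t) \<and> sq_int (\<lambda>x. real (Y t x))"
proof (induction t)
  case 0
  then show ?case using sq_int_lam0 sq_int_step[of 0] by blast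
next
  case (Suc t)
  then have "sq_int (\<lambda>x. a * real (Y t x) + b0 + b1 * real (Suc t))"
    by (intro sq_int_add sq_int_cmult sq_int_const) auto
  moreover have "lam (Suc t) = (\<lambda>x. a * real (Y t x) + b0 + b1 * real (Suc t))"
    using lam_eq[of "Suc t"] by simp
  ultimately have "sq_int (lam (Suc t))" by simp
  then show ?case using sq_int_step[of "Suc t"] by blast
qed

lemma sqY: "sq_int (\<lambda>x. real (Y t x))" and sqlam: "sq_int (lam t)"
  using sq_int_all by auto

lemma EY: "(\<integral>x. real (Y t x) \<partial>M) = (\<integral>x. lam t x \<partial>M)"
  using lam_AE_nonneg[of t] sq_int_integrable[OF sqlam]
  by (intro int_from_nn(2)[OF _ _ _ _ Nsp1]) (auto elim!: eventually_mono)

lemma EY2: "(\<integral>x. (real (Y t x))^2 \<partial>M) = (\<integral>x. (lam t x)^2 + lam t x \<partial>M)"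
  using lam_AE_nonneg[of t] sq_intD(2)[OF sqlam] sq_int_integrable[OF sqlam]
  by (intro int_from_nn(2)[OF _ _ _ _ Nsp2]) (auto elim!: eventually_mono)

lemma rceY: "AE x in M. real_cond_exp M (F t) (\<lambda>x. real (Y t x)) x = lam t x"
proof -
  interpret S: sigma_finite_subalgebra M "F t" by (rule sfs)
  show ?thesis
  proof (rule S.real_cond_exp_charact)
    fix A assume A: "A \<in> sets (F t)"
    have AM[measurable]: "A \<in> sets M" using FM[OF A] .
    have il: "integrable M (\<lambda>x. indicator A x * lam t x)"
      using integrable_mult_indicator[OF AM sq_int_integrable[OF sqlam]] by simp
    have "(\<integral>x. indicator A x * real (Y t x) \<partial>M) = (\<integral>x. indicator A x * lam t x \<partial>M)"
      using lam_AE_nonneg[of t] il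
      by (intro int_from_nn(2)[OF _ _ _ _ N1[OF A]]) (auto elim!: eventually_mono)
    then show "(\<integral>x\<in>A. real (Y t x) \<partial>M) = (\<integral>x\<in>A. lam t x \<partial>M)"
      unfolding set_lebesgue_integral_def by simp
  qed (auto intro: sq_int_integrable sqY sqlam lam_F)
qed

lemma orth:
  assumes Z[measurable]: "Z \<in> borel_measurable (F t)" and sZ: "sq_int Z"
  shows "(\<integral>x. Z x * real (Y t x) \<partial>M) = (\<integral>x. Z x * lam t x \<partial>M)"
proof -
  interpret S: sigma_finite_subalgebra M "F t" by (rule sfs)
  have "(\<integral>x. Z x * real (Y t x) \<partial>M) = (\<integral>x. Z x * real_cond_exp M (F t) (\<lambda>x. real (Y t x)) x \<partial>M)"
    by (rule S.real_cond_exp_intg(2)[symmetric]) (auto intro: sq_int_mult sZ sqY)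
  also have "\<dots> = (\<integral>x. Z x * lam t x \<partial>M)"
    using rceY[of t] sZ by (intro integral_cong_AE) (auto elim!: eventually_mono dest: sq_intD)
  finally show ?thesis .
qed


definition eps :: "nat \<Rightarrow> 'a \<Rightarrow> real" where
  "eps t x = real (Y t x) - lam t x"

lemma sq_eps: "sq_int (eps t)"
  unfolding eps_def by (rule sq_int_diff[OF sqY sqlam])

lemma eps_F: "t < s \<Longrightarrow> eps t \<in> borel_measurable (F s)"
proof -
  assume "t < s"
  then show ?thesis unfolding eps_def using Y_F[OF \<open>t < s\<close>] lam_F[of t s]
    by (intro borel_measurable_diff) auto
qed

lemma orth_eps:
  assumes Z: "Z \<in> borel_measurable (F t)" and sZ: "sq_int Z"
  shows "(\<integral>x. Z x * eps t x \<partial>M) = 0"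
proof -
  have "(\<lambda>x. Z x * eps t x) = (\<lambda>x. Z x * real (Y t x) - Z x * lam t x)"
    unfolding eps_def by (simp add: algebra_simps)
  then have "(\<integral>x. Z x * eps t x \<partial>M) = (\<integral>x. Z x * real (Y t x) \<partial>M) - (\<integral>x. Z x * lam t x \<partial>M)"
    using sq_int_mult[OF sZ sqY] sq_int_mult[OF sZ sqlam] by simp
  then show ?thesis using orth[OF Z sZ] by simp
qed

lemma Eeps2: "(\<integral>x. (eps t x)^2 \<partial>M) = (\<integral>x. lam t x \<partial>M)"
proof -
  have i1: "integrable M (\<lambda>x. (real (Y t x))^2)" by (rule sq_intD(2)[OF sqY])
  have i2: "integrable M (\<lambda>x. (lam t x)^2)" by (rule sq_intD(2)[OF sqlam])
  have i3: "integrable M (\<lambda>x. lam t x * eps t x)" by (rule sq_int_mult[OF sqlam sq_eps])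
  have i4: "integrable M (lam t)" by (rule sq_int_integrable[OF sqlam])
  have "(\<lambda>x. (eps t x)^2) = (\<lambda>x. (real (Y t x))^2 - (lam t x)^2 - 2 * (lam t x * eps t x))"
    unfolding eps_def by (simp add: power2_eq_square algebra_simps)
  then have "(\<integral>x. (eps t x)^2 \<partial>M) = (\<integral>x. (real (Y t x))^2 \<partial>M) - (\<integral>x. (lam t x)^2 \<partial>M) - 2 * (\<integral>x. lam t x * eps t x \<partial>M)"
    using i1 i2 i3 by simp
  also have "(\<integral>x. lam t x * eps t x \<partial>M) = 0"
    by (rule orth_eps[OF lam_F[of t t] sqlam]) simp
  also have "(\<integral>x. (real (Y t x))^2 \<partial>M) = (\<integral>x. (lam t x)^2 \<partial>M) + (\<integral>x. lam t x \<partial>M)"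
    using EY2[of t] i2 i4 by simp
  finally show ?thesis by simp
qed

definition Zs :: "(nat \<Rightarrow> real) \<Rightarrow> nat \<Rightarrow> 'a \<Rightarrow> real" where
  "Zs w m x = (\<Sum>t\<in>{1..m}. w t * eps t x)"

lemma sq_Zs: "sq_int (Zs w m)"
  unfolding Zs_def by (intro sq_int_sum sq_int_cmult sq_eps)

lemma Zs_F: "Zs w m \<in> borel_measurable (F (Suc m))"
  unfolding Zs_def
  by (intro borel_measurable_sum borel_measurable_times borel_measurable_const eps_F) auto

lemma EZs2: "(\<integral>x. (Zs w m x)^2 \<partial>M) = (\<Sum>t\<in>{1..m}. (w t)^2 * (\<integral>x. lam t x \<partial>M))"
proof (induction m)
  case 0
  then show ?case by (simp add: Zs_def)
next
  case (Suc m)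
  have eq: "(\<lambda>x. (Zs w (Suc m) x)^2) = (\<lambda>x. (Zs w m x)^2 + 2 * w (Suc m) * (Zs w m x * eps (Suc m) x) + (w (Suc m))^2 * (eps (Suc m) x)^2)"
    by (rule ext) (simp add: Zs_def power2_eq_square algebra_simps)
  have i1: "integrable M (\<lambda>x. (Zs w m x)^2)" by (rule sq_intD(2)[OF sq_Zs])
  have i2: "integrable M (\<lambda>x. Zs w m x * eps (Suc m) x)" by (rule sq_int_mult[OF sq_Zs sq_eps])
  have i3: "integrable M (\<lambda>x. (eps (Suc m) x)^2)" by (rule sq_intD(2)[OF sq_eps])
  have "(\<integral>x. (Zs w (Suc m) x)^2 \<partial>M) = (\<integral>x. (Zs w m x)^2 \<partial>M) + 2 * w (Suc m) * (\<integral>x. Zs w m x * eps (Suc m) x \<partial>M) + (w (Suc m))^2 * (\<integral>x. (eps (Suc m) x)^2 \<partial>M)"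
    unfolding eq using i1 i2 i3 by simp
  also have "(\<integral>x. Zs w m x * eps (Suc m) x \<partial>M) = 0"
    by (rule orth_eps[OF Zs_F sq_Zs])
  also note Eeps2
  finally show ?case using Suc.IH by simp
qed

definition mu :: "nat \<Rightarrow> real" where "mu t = (\<integral>x. lam t x \<partial>M)"

definition Cb :: real where "Cb = mu 0 + (b0 + b1) / (1 - a)"

lemma mu_nonneg: "mu t \<ge> 0"
  unfolding mu_def using lam_AE_nonneg by (intro integral_nonneg_AE) auto

lemma mu_Suc: "mu (Suc t) = a * mu t + b0 + b1 * real (Suc t)"
proof -
  have "lam (Suc t) = (\<lambda>x. a * real (Y t x) + b0 + b1 * real (Suc t))"
    using lam_eq[of "Suc t"] by simp
  then have "mu (Suc t) = (\<integral>x. a * real (Y t x) + b0 + b1 * real (Suc t) \<partial>M)"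
    unfolding mu_def by simp
  also have "\<dots> = a * (\<integral>x. real (Y t x) \<partial>M) + b0 + b1 * real (Suc t)"
    using sq_int_integrable[OF sqY] by (simp add: prob_space)
  finally show ?thesis unfolding mu_def EY by simp
qed

lemma Cb_ge: "(1 - a) * Cb \<ge> b0 + b1" "Cb \<ge> 0"
proof -
  have "(1 - a) * ((b0 + b1) / (1 - a)) = b0 + b1" using alt1 by simp
  moreover have "(1 - a) * mu 0 \<ge> 0" using alt1 mu_nonneg[of 0] by simp
  ultimately show "(1 - a) * Cb \<ge> b0 + b1" unfolding Cb_def by (simp add: distrib_left)
  show "Cb \<ge> 0" unfolding Cb_def using mu_nonneg[of 0] alt1 b0pos b1pos by simp
qed

lemma mu_bound: "mu t \<le> Cb * (real t + 1)"
proof (induction t)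
  case 0
  then show ?case unfolding Cb_def using alt1 b0pos b1pos by simp
next
  case (Suc t)
  have "mu (Suc t) = a * mu t + b0 + b1 * (real t + 1)" by (simp add: mu_Suc)
  also have "\<dots> \<le> a * (Cb * (real t + 1)) + b0 + b1 * (real t + 1)"
    using Suc.IH apos by simp
  also have "\<dots> \<le> Cb * (real (Suc t) + 1)"
  proof -
    have "(b0 + b1) * (real t + 1) \<le> (1 - a) * Cb * (real t + 1)"
      using Cb_ge(1) by (intro mult_right_mono) auto
    moreover have "b0 \<le> b0 * (real t + 1)" using b0pos mult_nonneg_nonneg[of b0 "real t"] by (simp add: distrib_left)
    ultimately show ?thesis using Cb_ge(2) b1pos by (simp add: algebra_simps)
  qed
  finally show ?case .
qed


lemma theta_ineq:
  assumes n: "n \<ge> 2"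
  shows "(1 - a) * theta1_hat Y n x \<ge> b1 * sqrt (Q n) + Zs (trend_weight n) n x
           - a * ((real n + 1) / 2 / sqrt (Q n)) * (real (Y 0 x) + real (Y n x))"
proof -
  define c where "c = (real n + 1) / 2 / sqrt (Q n)"
  have P: "(1 - a) * (\<Sum>t=1..n. trend_weight n t * real (Y t x)) \<ge>
      b0 * (\<Sum>t=1..n. trend_weight n t) + b1 * (\<Sum>t=1..n. trend_weight n t * real t)
      + (\<Sum>t=1..n. trend_weight n t * eps t x)
      + a * (trend_weight n 0 * real (Y 0 x) - trend_weight n n * real (Y n x))"
  proof (rule pointwise_ineq)
    show "\<And>k. trend_weight n k \<le> trend_weight n (Suc k)" by (rule tw_mono)
    show "\<And>k. 0 \<le> real (Y k x)" by simp
    show "0 \<le> a" using apos by simp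
    fix t :: nat assume "t \<ge> 1"
    then show "real (Y t x) = a * real (Y (t - 1) x) + b0 + b1 * real t + eps t x"
      using lamrec[of t x] unfolding eps_def by simp
  qed
  have h: "trend_weight n n * real (Y n x) \<le> c * real (Y n x)"
    unfolding c_def by (rule mult_right_mono[OF tw_n]) simp
  have h0: "trend_weight n 0 * real (Y 0 x) = - (c * real (Y 0 x))"
    unfolding c_def tw_0 by simp
  have "a * (trend_weight n 0 * real (Y 0 x) - trend_weight n n * real (Y n x)) \<ge> a * (- (c * real (Y 0 x)) - c * real (Y n x))"
    using h apos unfolding h0 by (intro mult_left_mono) auto
  then show ?thesis
    using P unfolding tw_sum0 tw_sumt[OF n] theta1_hat_def Zs_def c_def[symmetric]
    by (simp add: algebra_simps)
qed

lemma per_n: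
  assumes n2: "n \<ge> 2" and cond: "(1 - a) * K < b1 * sqrt (Q n) / 3"
  shows "measure M {x\<in>space M. theta1_hat Y n x > K} \<ge>
    1 - (a * ((real n + 1) / 2 / sqrt (Q n)) * (Cb * (real n + 2)) / (b1 * sqrt (Q n) / 3)
       + Cb * (real n + 1) / (b1 * sqrt (Q n) / 3)^2)"
proof -
  define B where "B = b1 * sqrt (Q n)"
  define c where "c = (real n + 1) / 2 / sqrt (Q n)"
  define U where "U x = a * c * (real (Y 0 x) + real (Y n x))" for x
  define Z where "Z = Zs (trend_weight n) n"
  have Bpos: "B > 0" unfolding B_def using Q_pos[OF n2] b1pos by simp
  have cnn: "c \<ge> 0" unfolding c_def using Q_nonneg[of n] by simp
  have Um[measurable]: "U \<in> borel_measurable M" unfolding U_def by measurable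
  have Zm[measurable]: "Z \<in> borel_measurable M" unfolding Z_def by (rule sq_intD(1)[OF sq_Zs])
  have thmeas[measurable]: "(\<lambda>x. theta1_hat Y n x) \<in> borel_measurable M"
    unfolding theta1_hat_def by measurable
  have sub: "{x\<in>space M. theta1_hat Y n x \<le> K} \<subseteq> {x\<in>space M. U x \<ge> B/3} \<union> {x\<in>space M. (Z x)^2 \<ge> (B/3)^2}"
  proof
    fix x assume x: "x \<in> {x\<in>space M. theta1_hat Y n x \<le> K}"
    show "x \<in> {x\<in>space M. U x \<ge> B/3} \<union> {x\<in>space M. (Z x)^2 \<ge> (B/3)^2}"
    proof (cases "U x \<ge> B/3 \<or> Z x \<le> - (B/3)")
      case True
      then show ?thesis
      proof
        assume "U x \<ge> B/3" then show ?thesis using x by auto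
      next
        assume "Z x \<le> - (B/3)"
        then have "(B/3)^2 \<le> (- Z x)^2" using Bpos by (intro power_mono) auto
        then show ?thesis using x by auto
      qed
    next
      case False
      have "(1 - a) * theta1_hat Y n x \<ge> B + Z x - U x"
        using theta_ineq[OF n2, of x] unfolding B_def Z_def U_def c_def by (simp add: algebra_simps)
      moreover have "(1 - a) * theta1_hat Y n x \<le> (1 - a) * K"
        using x alt1 by (intro mult_left_mono) auto
      ultimately have False using False cond unfolding B_def by linarith
      then show ?thesis ..
    qed
  qed
  have iU: "integrable M U"
    unfolding U_def using sq_int_integrable[OF sqY, of 0] sq_int_integrable[OF sqY, of n] by auto
  have EU: "(\<integral>x. U x \<partial>M) = a * c * (mu 0 + mu n)"
    unfolding U_def mu_def using sq_int_integrable[OF sqY, of 0] sq_int_integrable[OF sqY, of n]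
    by (simp add: EY)
  have EU2: "(\<integral>x. U x \<partial>M) \<le> a * c * (Cb * (real n + 2))"
  proof -
    have "mu 0 + mu n \<le> Cb * (real n + 2)" using mu_bound[of 0] mu_bound[of n] by (simp add: algebra_simps)
    then show ?thesis unfolding EU using apos cnn by (intro mult_left_mono) auto
  qed
  have P1: "measure M {x\<in>space M. U x \<ge> B/3} \<le> a * c * (Cb * (real n + 2)) / (B/3)"
  proof -
    have "measure M {x\<in>space M. U x \<ge> B/3} \<le> (\<integral>x. U x \<partial>M) / (B/3)"
      by (rule integral_Markov_inequality_measure[OF iU sets.top]) (use Bpos apos cnn in \<open>auto simp: U_def\<close>)
    also have "\<dots> \<le> a * c * (Cb * (real n + 2)) / (B/3)"
      using EU2 Bpos by (intro divide_right_mono) auto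
    finally show ?thesis .
  qed
  have iZ: "integrable M (\<lambda>x. (Z x)^2)" unfolding Z_def by (rule sq_intD(2)[OF sq_Zs])
  have EZ: "(\<integral>x. (Z x)^2 \<partial>M) \<le> Cb * (real n + 1)"
  proof -
    have "(\<integral>x. (Z x)^2 \<partial>M) = (\<Sum>t\<in>{1..n}. (trend_weight n t)^2 * mu t)"
      unfolding Z_def EZs2 mu_def ..
    also have "\<dots> \<le> (\<Sum>t\<in>{1..n}. (trend_weight n t)^2 * (Cb * (real n + 1)))"
    proof (intro sum_mono mult_left_mono)
      fix t assume "t \<in> {1..n}"
      then have "real t + 1 \<le> real n + 1" by simp
      then show "mu t \<le> Cb * (real n + 1)"
        using mu_bound[of t] Cb_ge(2) mult_left_mono by (meson order_trans)
    qed simp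
    also have "\<dots> = Cb * (real n + 1)"
      using tw_sq[OF n2] by (simp add: sum_distrib_right[symmetric])
    finally show ?thesis .
  qed
  have P2: "measure M {x\<in>space M. (Z x)^2 \<ge> (B/3)^2} \<le> Cb * (real n + 1) / (B/3)^2"
  proof -
    have "measure M {x\<in>space M. (Z x)^2 \<ge> (B/3)^2} \<le> (\<integral>x. (Z x)^2 \<partial>M) / (B/3)^2"
      by (rule integral_Markov_inequality_measure[OF iZ sets.top]) (use Bpos in auto)
    also have "\<dots> \<le> Cb * (real n + 1) / (B/3)^2"
      using EZ Bpos by (intro divide_right_mono) auto
    finally show ?thesis .
  qed
  have "measure M {x\<in>space M. theta1_hat Y n x \<le> K} \<le> measure M ({x\<in>space M. U x \<ge> B/3} \<union> {x\<in>space M. (Z x)^2 \<ge> (B/3)^2})"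
    by (rule finite_measure_mono[OF sub]) measurable
  also have "\<dots> \<le> measure M {x\<in>space M. U x \<ge> B/3} + measure M {x\<in>space M. (Z x)^2 \<ge> (B/3)^2}"
    by (rule measure_Un_le) measurable
  finally have le: "measure M {x\<in>space M. theta1_hat Y n x \<le> K} \<le> a * c * (Cb * (real n + 2)) / (B/3) + Cb * (real n + 1) / (B/3)^2"
    using P1 P2 by linarith
  have "{x\<in>space M. theta1_hat Y n x > K} = space M - {x\<in>space M. theta1_hat Y n x \<le> K}" by auto
  then have "measure M {x\<in>space M. theta1_hat Y n x > K} = 1 - measure M {x\<in>space M. theta1_hat Y n x \<le> K}"
    using prob_compl[of "{x\<in>space M. theta1_hat Y n x \<le> K}"] by simp
  then show ?thesis using le unfolding B_def c_def by simp
qed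


lemma main:
  assumes K: "K > 0"
  shows "(\<lambda>n. measure M {x\<in>space M. theta1_hat Y n x > K}) \<longlonglongrightarrow> 1"
proof -
  define D where "D = 36 * a * Cb / b1 + 108 * Cb / b1^2"
  obtain N :: nat where N: "2 + 12 * (1 - a) * K / b1 \<le> real N" using real_arch_simple by blast
  have low: "eventually (\<lambda>n. 1 - D / (real n - 1) \<le> measure M {x\<in>space M. theta1_hat Y n x > K}) sequentially"
  proof (rule eventually_sequentiallyI[of N])
    fix n assume nN: "N \<le> n"
    have nonneg: "12 * (1 - a) * K / b1 \<ge> 0" using K alt1 b1pos by simp
    have nr: "2 + 12 * (1 - a) * K / b1 \<le> real n" using N nN by linarith
    then have n2: "n \<ge> 2" using nonneg by linarith
    have Qeq: "Q n = real n * (real n - 1) * (real n + 1) / 12" by (rule Q_eq)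
    have "((real n - 1) / 4)^2 \<le> Q n"
    proof -
      have "real n - 1 \<ge> 0" using n2 by simp
      have "(real n - 1) * 12 \<le> real n * (real n + 1) * 16" using n2 by (simp add: algebra_simps)
      then have "(real n - 1) * ((real n - 1) * 12) \<le> (real n - 1) * (real n * (real n + 1) * 16)"
        using \<open>real n - 1 \<ge> 0\<close> by (rule mult_left_mono)
      then show ?thesis unfolding Qeq by (simp add: power2_eq_square field_simps)
    qed
    then have sq: "(real n - 1) / 4 \<le> sqrt (Q n)" by (rule real_le_rsqrt)
    have "(1 - a) * K < b1 * ((real n - 1) / 4) / 3"
    proof -
      have "12 * (1 - a) * K / b1 < real n - 1" using nr by linarith
      then have "12 * (1 - a) * K < (real n - 1) * b1" using b1pos by (simp add: divide_less_eq)
      then show ?thesis by (simp add: field_simps)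
    qed
    also have "\<dots> \<le> b1 * sqrt (Q n) / 3" using sq b1pos by (intro divide_right_mono mult_left_mono) auto
    finally have cond: "(1 - a) * K < b1 * sqrt (Q n) / 3" .
    have pb: "a * ((real n + 1) / 2 / sqrt (Q n)) * (Cb * (real n + 2)) / (b1 * sqrt (Q n) / 3)
        + Cb * (real n + 1) / (b1 * sqrt (Q n) / 3)^2 \<le> D / (real n - 1)"
      unfolding D_def
    proof (rule pbound_gen)
      show "2 \<le> real n" using n2 by simp
      show "0 < sqrt (Q n)" using Q_pos[OF n2] by simp
      show "(sqrt (Q n))^2 = real n * (real n - 1) * (real n + 1) / 12" using Q_nonneg[of n] Qeq by simp
    qed (use apos Cb_ge(2) b1pos in auto)
    show "1 - D / (real n - 1) \<le> measure M {x\<in>space M. theta1_hat Y n x > K}"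
      using per_n[OF n2 cond] pb by linarith
  qed
  have up: "eventually (\<lambda>n. measure M {x\<in>space M. theta1_hat Y n x > K} \<le> 1) sequentially"
    by (intro always_eventually allI prob_le_1)
  show ?thesis by (rule tendsto_sandwich[OF low up lim_aux[of D] tendsto_const])
qed

end

theorem proposition5p2:
  fixes M :: "'a measure" and Y :: "nat \<Rightarrow> 'a \<Rightarrow> nat" and lam :: "nat \<Rightarrow> 'a \<Rightarrow> real"
    and a b0 b1 :: real
  assumes "prob_space M"
    and "\<And>t. Y t \<in> measurable M (count_space UNIV)"
    and "lam 0 \<in> borel_measurable M"
    and "AE x in M. lam 0 x \<ge> 0"
    and "integrable M (\<lambda>x. \<bar>lam 0 x\<bar> ^ 4)"
    and "0 < a" and "a < 1" and "0 \<le> b0" and "0 < b1"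
    and "\<And>t x. t \<ge> 1 \<Longrightarrow> lam t x = a * real (Y (t - 1) x) + b0 + b1 * real t"
    and "\<And>t k. AE x in M.
           real_cond_exp M (past_sigma M Y lam t) (indicator {y \<in> space M. Y t y = k}) x
             = pois_prob (lam t x) k"
  shows "\<forall>K > 0. (\<lambda>n. measure M {x \<in> space M. theta1_hat Y n x > K}) \<longlonglongrightarrow> 1"
proof -
  interpret I: inarch M Y lam a b0 b1
    using assms unfolding inarch_def inarch_axioms_def by blast
  show ?thesis using I.main by blast
qed

end
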